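(* Let $d\ge2$ and suppose $Q(z)=z^d+t$ ($t\in\mathbb{C}$) is post-critically finite. Let $\lambda\neq0$ be the multiplier of some periodic orbit of $Q$. Then $\lambda$ belongs to some number field $\mathbb{K}$, and for any non-Archimedean place $v$ of $\mathbb{K}$: $|\lambda|_v<1$ if the residual characteristic of $\mathbb{K}_v$ divides $d$, and $|\lambda|_v=1$ if the residual characteristic of $\mathbb{K}_v$ is prime to $d$.
   Context: A polynomial is post-critically finite if all its critical points have finite forward orbits. *)

theory Defs
  imports "HOL-Analysis.Analysis" "HOL-Computational_Algebra.Polynomial"
begin

definition post_critically_finite :: "complex poly \<Rightarrow> bool" where
  "post_critically_finite p \<longleftrightarrow>
     (\<forall>c. poly (pderiv p) c = 0 \<longrightarrow> finite (range (\<lambda>n. (poly p ^^ n) c)))"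

definition periodic_multiplier :: "complex poly \<Rightarrow> complex \<Rightarrow> bool" where
  "periodic_multiplier p lam \<longleftrightarrow>
     (\<exists>z n. n > 0 \<and> (poly p ^^ n) z = z \<and>
        (\<forall>m. 0 < m \<and> m < n \<longrightarrow> (poly p ^^ m) z \<noteq> z) \<and>
        lam = deriv (poly p ^^ n) z)"

definition number_field :: "complex set \<Rightarrow> bool" where
  "number_field K \<longleftrightarrow>
     0 \<in> K \<and> 1 \<in> K \<and>
     (\<forall>x\<in>K. \<forall>y\<in>K. x + y \<in> K \<and> x * y \<in> K) \<and>
     (\<forall>x\<in>K. - x \<in> K) \<and> (\<forall>x\<in>K. x \<noteq> 0 \<longrightarrow> inverse x \<in> K) \<and>
     (\<exists>B. finite B \<and> B \<subseteq> K \<and>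
        (\<forall>x\<in>K. \<exists>c::complex \<Rightarrow> rat. x = (\<Sum>b\<in>B. of_rat (c b) * b)))"

text \<open>A nontrivial non-Archimedean absolute value on K (values outside K are
  irrelevant). Non-Archimedean places of K are equivalence classes of these;
  the conditions in the theorem are invariant under equivalence.\<close>
definition nonarch_abs :: "complex set \<Rightarrow> (complex \<Rightarrow> real) \<Rightarrow> bool" where
  "nonarch_abs K v \<longleftrightarrow>
     (\<forall>x\<in>K. v x \<ge> 0) \<and> (\<forall>x\<in>K. v x = 0 \<longleftrightarrow> x = 0) \<and>
     (\<forall>x\<in>K. \<forall>y\<in>K. v (x * y) = v x * v y) \<and>
     (\<forall>x\<in>K. \<forall>y\<in>K. v (x + y) \<le> max (v x) (v y)) \<and>
     (\<exists>x\<in>K. x \<noteq> 0 \<and> v x \<noteq> 1)"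

text \<open>Residual characteristic: the characteristic of the residue field
  {x. v x \<le> 1} / {x. v x < 1}, i.e. the least positive n with n*1 in the
  maximal ideal.\<close>
definition residual_char :: "(complex \<Rightarrow> real) \<Rightarrow> nat" where
  "residual_char v = (LEAST n::nat. 0 < n \<and> v (of_nat n) < 1)"

end

theory Submission
  imports Defs
begin

definition qs :: "rat \<Rightarrow> complex \<Rightarrow> complex" where "qs q x = of_rat q * x"

interpretation Q: vector_space qs
  by unfold_locales (auto simp: qs_def algebra_simps of_rat_add of_rat_mult)

lemma span_mult_closed:
  assumes "\<And>a b. a \<in> A \<Longrightarrow> b \<in> B \<Longrightarrow> a * b \<in> Q.span C"
    and "x \<in> Q.span A" and "y \<in> Q.span B"
  shows "x * y \<in> Q.span C"
  using assms(2)
proof (induct rule: Q.span_induct_alt)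
  case base then show ?case by (simp add: Q.span_zero)
next
  case (step c a x)
  have "a * y \<in> Q.span C" using assms(3)
  proof (induct rule: Q.span_induct_alt)
    case base then show ?case by (simp add: Q.span_zero)
  next
    case (step c' b y')
    have "a * (qs c' b + y') = qs c' (a * b) + a * y'" by (simp add: qs_def algebra_simps)
    then show ?case using step assms(1)[OF \<open>a \<in> A\<close>] by (simp add: Q.span_add Q.span_scale)
  qed
  moreover have "(qs c a + x) * y = qs c (a * y) + x * y" by (simp add: qs_def algebra_simps)
  ultimately show ?case using step by (simp add: Q.span_add Q.span_scale)
qed

definition finring :: "complex set \<Rightarrow> bool" where
  "finring S \<longleftrightarrow> finite S \<and> 1 \<in> Q.span S \<and> (\<forall>a\<in>S. \<forall>b\<in>S. a * b \<in> Q.span S)"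

lemma finring_mult: "finring S \<Longrightarrow> x \<in> Q.span S \<Longrightarrow> y \<in> Q.span S \<Longrightarrow> x * y \<in> Q.span S"
  by (rule span_mult_closed[of S S]) (auto simp: finring_def)

lemma finring_power: "finring S \<Longrightarrow> x \<in> Q.span S \<Longrightarrow> x ^ n \<in> Q.span S"
  by (induct n) (auto simp: finring_def finring_mult)

lemma span_of_rat: "1 \<in> Q.span S \<Longrightarrow> of_rat q \<in> Q.span S"
  using Q.span_scale[of 1 S q] by (simp add: qs_def)

lemma finring_one: "finring {1}"
  by (auto simp: finring_def Q.span_base)

lemma powers_dependent:
  assumes fin: "finite B" and sp: "\<And>i. x ^ i \<in> Q.span B"
  shows "\<exists>c N. (\<exists>i\<le>N. c i \<noteq> 0) \<and> (\<Sum>i\<le>N. of_rat (c i) * x ^ i) = 0"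
proof (cases "inj_on (\<lambda>i. x ^ i) {..card B}")
  case True
  let ?P = "(\<lambda>i. x ^ i) ` {..card B}"
  have cP: "card ?P = Suc (card B)" using True by (simp add: card_image)
  have "Q.dependent ?P"
  proof (rule ccontr)
    assume "\<not> Q.dependent ?P"
    then have "card ?P \<le> card B" using Q.independent_span_bound[OF fin] sp by auto
    with cP show False by simp
  qed
  then obtain u where u: "\<exists>v\<in>?P. u v \<noteq> 0" "(\<Sum>v\<in>?P. qs (u v) v) = 0"
    using Q.dependent_finite[of ?P] by auto
  define c where "c i = u (x ^ i)" for i
  have "(\<Sum>i\<le>card B. of_rat (c i) * x ^ i) = (\<Sum>v\<in>?P. qs (u v) v)"
    by (simp add: sum.reindex[OF True] c_def qs_def)
  then have s0: "(\<Sum>i\<le>card B. of_rat (c i) * x ^ i) = 0" using u(2) by simp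
  from u(1) obtain i where "i \<le> card B" "c i \<noteq> 0" by (auto simp: c_def)
  then show ?thesis using s0 by blast
next
  case False
  then obtain i j where ij: "i \<le> card B" "j \<le> card B" "i \<noteq> j" "x ^ i = x ^ j"
    by (auto simp: inj_on_def)
  define c where "c k = (if k = i then 1 else if k = j then -1 else 0 :: rat)" for k
  have eq: "\<And>k. of_rat (c k) * x ^ k = (if k = i then x ^ i else 0) - (if k = j then x ^ j else 0)"
    using ij(3) by (auto simp: c_def)
  have "(\<Sum>k\<le>card B. of_rat (c k) * x ^ k) = x ^ i - x ^ j"
    unfolding eq sum_subtractf using ij by simp
  then have "(\<Sum>k\<le>card B. of_rat (c k) * x ^ k) = 0" using ij(4) by simp
  moreover have "c i \<noteq> 0" by (simp add: c_def)
  ultimately show ?thesis using ij(1) by blast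
qed

lemma inv_from_rel:
  assumes S: "finring S" and x: "x \<in> Q.span S" and x0: "x \<noteq> 0"
  shows "(\<exists>i\<le>N. c i \<noteq> 0) \<Longrightarrow> (\<Sum>i\<le>N. of_rat (c i) * x ^ i) = 0 \<Longrightarrow> \<exists>y\<in>Q.span S. x * y = 1"
proof (induct N arbitrary: c)
  case 0
  then show ?case by simp
next
  case (Suc N)
  let ?w = "\<Sum>i\<le>N. of_rat (c (Suc i)) * x ^ i"
  have split: "(\<Sum>i\<le>Suc N. of_rat (c i) * x ^ i) = of_rat (c 0) + x * ?w"
    by (simp only: sum.atMost_Suc_shift sum_distrib_left) (simp add: ac_simps)
  show ?case
  proof (cases "c 0 = 0")
    case True
    then have "x * ?w = 0" using Suc.prems split by simp
    hence w0: "?w = 0" using x0 by simp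
    from Suc.prems(1) obtain i where i: "i \<le> Suc N" "c i \<noteq> 0" by auto
    with True obtain i' where "i = Suc i'" by (cases i) auto
    with i have "\<exists>i\<le>N. c (Suc i) \<noteq> 0" by auto
    then show ?thesis using Suc.hyps[of "\<lambda>i. c (Suc i)"] w0 by auto
  next
    case False
    have one: "1 \<in> Q.span S" using S by (simp add: finring_def)
    have w: "?w \<in> Q.span S"
      by (intro Q.span_sum finring_mult[OF S] span_of_rat[OF one] finring_power[OF S x])
    have xw: "x * ?w = - of_rat (c 0)" using Suc.prems(2) split by (simp add: add_eq_0_iff)
    have "x * (- of_rat (inverse (c 0)) * ?w) = - of_rat (inverse (c 0)) * (x * ?w)"
      by (simp add: algebra_simps)
    also have "\<dots> = 1" using False by (simp add: xw of_rat_inverse)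
    finally show ?thesis
      by (intro bexI[of _ "- of_rat (inverse (c 0)) * ?w"] finring_mult[OF S] Q.span_neg
          span_of_rat[OF one] w)
  qed
qed

lemma mk_nf:
  assumes S: "finring S"
  shows "number_field (Q.span S)"
  unfolding number_field_def
proof (intro conjI ballI impI)
  show "0 \<in> Q.span S" by (rule Q.span_zero)
  show "1 \<in> Q.span S" using S by (simp add: finring_def)
  fix x assume x: "x \<in> Q.span S"
  show "- x \<in> Q.span S" using x by (rule Q.span_neg)
  { fix y assume "y \<in> Q.span S"
    then show "x + y \<in> Q.span S" "x * y \<in> Q.span S" using x S by (auto simp: Q.span_add finring_mult) }
  { assume x0: "x \<noteq> 0"
    have fin: "finite S" using S by (simp add: finring_def)
    obtain c N where "\<exists>i\<le>N. c i \<noteq> 0" "(\<Sum>i\<le>N. of_rat (c i) * x ^ i) = 0"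
      using powers_dependent[OF fin finring_power[OF S x]] by blast
    then obtain y where "y \<in> Q.span S" "x * y = 1" using inv_from_rel[OF S x x0] by blast
    then show "inverse x \<in> Q.span S" using inverse_unique by metis }
next
  have fin: "finite S" using S by (simp add: finring_def)
  show "\<exists>B. finite B \<and> B \<subseteq> Q.span S \<and> (\<forall>x\<in>Q.span S. \<exists>c. x = (\<Sum>b\<in>B. of_rat (c b) * b))"
  proof (intro exI[of _ S] conjI ballI)
    show "S \<subseteq> Q.span S" by (rule Q.span_superset)
    fix x assume "x \<in> Q.span S"
    then show "\<exists>c. x = (\<Sum>b\<in>S. of_rat (c b) * b)"
      unfolding Q.span_finite[OF fin] by (auto simp: qs_def)
  qed (fact fin)
qed

lemma adjoin:
  assumes S: "finring S" and N: "N > 0" and r: "\<And>k. k < N \<Longrightarrow> r k \<in> Q.span S"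
    and rel: "y ^ N = (\<Sum>k<N. r k * y ^ k)"
  defines "S' \<equiv> (\<lambda>(s,i). s * y ^ i) ` (S \<times> {..<N})"
  shows "finring S'" "Q.span S \<subseteq> Q.span S'" "y \<in> Q.span S'"
proof -
  have key: "\<And>q. q \<in> Q.span S \<Longrightarrow> q * y ^ j \<in> Q.span S'" for j
  proof (induct j rule: less_induct)
    case (less j)
    show ?case
    proof (cases "j < N")
      case True
      show ?thesis
      proof (rule span_mult_closed[of S "{y ^ j}"])
        fix a b assume "a \<in> S" "b \<in> {y ^ j}"
        then have "a * b \<in> S'" using True unfolding S'_def by force
        then show "a * b \<in> Q.span S'" by (rule Q.span_base)
      qed (auto simp: less.prems Q.span_base)
    next
      case False
      have "y ^ j = y ^ (j - N) * y ^ N" using False by (simp add: power_add[symmetric])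
      then have "q * y ^ j = (\<Sum>k<N. (q * r k) * y ^ (j - N + k))"
        by (simp add: rel sum_distrib_left power_add algebra_simps)
      also have "\<dots> \<in> Q.span S'"
      proof (rule Q.span_sum)
        fix k assume "k \<in> {..<N}"
        then have "k < N" by simp
        then show "(q * r k) * y ^ (j - N + k) \<in> Q.span S'"
          using False less.prems r by (intro less.hyps finring_mult[OF S]) auto
      qed
      finally show ?thesis .
    qed
  qed
  have one: "1 \<in> Q.span S" using S by (simp add: finring_def)
  show sub: "Q.span S \<subseteq> Q.span S'" using key[of _ 0] by auto
  show "y \<in> Q.span S'" using key[OF one, of 1] by simp
  show "finring S'"
    unfolding finring_def
  proof (intro conjI ballI)
    show "finite S'" using S unfolding S'_def finring_def by auto
    show "1 \<in> Q.span S'" using sub one by auto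
    fix a b assume "a \<in> S'" "b \<in> S'"
    then obtain s i s' i' where "s \<in> S" "s' \<in> S" "a = s * y ^ i" "b = s' * y ^ i'"
      unfolding S'_def by auto
    then have "a * b = (s * s') * y ^ (i + i')" by (simp add: power_add algebra_simps)
    moreover have "s * s' \<in> Q.span S"
      using \<open>s \<in> S\<close> \<open>s' \<in> S\<close> by (intro finring_mult[OF S] Q.span_base)
    ultimately show "a * b \<in> Q.span S'" using key by simp
  qed
qed

lemma monic_rel:
  fixes p :: "complex poly"
  assumes "degree p = N" "lead_coeff p = 1" "poly p y = 0"
  shows "y ^ N = (\<Sum>k<N. (- coeff p k) * y ^ k)"
proof -
  have "0 = (\<Sum>i\<le>N. coeff p i * y ^ i)" using assms poly_altdef[of p y] by simp
  also have "\<dots> = (\<Sum>k<N. coeff p k * y ^ k) + y ^ N"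
    using assms by (simp add: lessThan_Suc_atMost[symmetric])
  finally show ?thesis by (simp add: sum_negf add_eq_0_iff)
qed

definition cin :: "complex set \<Rightarrow> complex poly \<Rightarrow> bool" where
  "cin R p \<longleftrightarrow> (\<forall>i. coeff p i \<in> R)"

lemma cin_add: "cin (Q.span S) p \<Longrightarrow> cin (Q.span S) q \<Longrightarrow> cin (Q.span S) (p + q)"
  by (simp add: cin_def Q.span_add)

lemma cin_diff: "cin (Q.span S) p \<Longrightarrow> cin (Q.span S) q \<Longrightarrow> cin (Q.span S) (p - q)"
  by (simp add: cin_def Q.span_diff)

lemma cin_mult: "finring S \<Longrightarrow> cin (Q.span S) p \<Longrightarrow> cin (Q.span S) q \<Longrightarrow> cin (Q.span S) (p * q)"
  unfolding cin_def coeff_mult by (auto intro!: Q.span_sum finring_mult)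

lemma cin_const: "c \<in> Q.span S \<Longrightarrow> cin (Q.span S) [:c:]"
  unfolding cin_def by (auto simp: coeff_pCons Q.span_zero split: nat.splits)

lemma cin_X: "finring S \<Longrightarrow> cin (Q.span S) [:0,1:]"
  unfolding cin_def finring_def by (auto simp: coeff_pCons Q.span_zero split: nat.splits)

lemma cin_power: "finring S \<Longrightarrow> cin (Q.span S) p \<Longrightarrow> cin (Q.span S) (p ^ n)"
proof (induct n)
  case 0
  then show ?case by (auto simp: cin_def coeff_1 finring_def Q.span_zero)
next
  case (Suc n)
  then show ?case by (simp add: cin_mult)
qed

fun Pt :: "nat \<Rightarrow> nat \<Rightarrow> complex poly" where
  "Pt d 0 = 0" | "Pt d (Suc j) = Pt d j ^ d + [:0,1:]"

fun Gz :: "nat \<Rightarrow> complex \<Rightarrow> nat \<Rightarrow> complex poly" where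
  "Gz d t 0 = [:0,1:]" | "Gz d t (Suc j) = Gz d t j ^ d + [:t:]"

lemma poly_Pt: "poly (Pt d j) t = ((\<lambda>x. x ^ d + t) ^^ j) 0"
  by (induct j) auto

lemma poly_Gz: "poly (Gz d t j) x = ((\<lambda>x. x ^ d + t) ^^ j) x"
  by (induct j) auto

lemma cin_Pt: assumes S: "finring S" shows "cin (Q.span S) (Pt d j)"
proof (induct j)
  case 0 show ?case by (simp add: cin_def Q.span_zero)
next
  case (Suc j) show ?case using Suc by (simp add: cin_add cin_power cin_X S)
qed

lemma cin_Gz: assumes S: "finring S" and t: "t \<in> Q.span S" shows "cin (Q.span S) (Gz d t j)"
proof (induct j)
  case 0 show ?case by (simp add: cin_X S)
next
  case (Suc j) show ?case using Suc by (simp add: cin_add cin_power cin_const S t)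
qed

lemma deg_Pt:
  assumes d: "d \<ge> 2"
  shows "degree (Pt d (Suc j)) = d ^ j \<and> lead_coeff (Pt d (Suc j)) = 1"
proof (induct j)
  case 0
  have P1: "Pt d (Suc 0) = [:0,1:]" using d by (simp add: power_0_left)
  show ?case by (simp only: P1) simp
next
  case (Suc j)
  let ?q = "Pt d (Suc j)"
  have lq: "lead_coeff ?q = 1" using Suc by blast
  have q0: "?q \<noteq> 0"
  proof
    assume "?q = 0"
    then have "lead_coeff ?q = 0" by (simp del: Pt.simps)
    then show False using lq by simp
  qed
  have dq0: "degree ?q = d ^ j" using Suc by blast
  have dq: "degree (?q ^ d) = d ^ Suc j" by (simp only: degree_power_eq[OF q0] dq0 power_Suc)
  have g1: "1 < d ^ Suc j" using d by (intro one_less_power) auto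
  have dX: "degree [:0,1::complex:] = 1" by simp
  have lt: "degree [:0,1::complex:] < degree (?q ^ d)" using dq dX g1 by linarith
  have "degree (?q ^ d + [:0,1:]) = d ^ Suc j" using degree_add_eq_left[OF lt] dq by (simp del: Pt.simps)
  moreover have "lead_coeff (?q ^ d + [:0,1:]) = 1"
  proof -
    have "lead_coeff (?q ^ d + [:0,1:]) = lead_coeff (?q ^ d)"
      using lead_coeff_add_le[OF lt] by (metis add.commute)
    also have "\<dots> = 1"
    proof -
      have l: "lead_coeff ?q = 1" using Suc by blast
      show ?thesis by (simp only: lead_coeff_power l) simp
    qed
    finally show ?thesis .
  qed
  ultimately show ?case unfolding Pt.simps(2)[of d "Suc j"] by blast
qed

lemma deg_Gz:
  assumes d: "d \<ge> 2"
  shows "degree (Gz d t j) = d ^ j \<and> lead_coeff (Gz d t j) = 1"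
proof (induct j)
  case 0
  then show ?case by simp
next
  case (Suc j)
  let ?q = "Gz d t j"
  have lq: "lead_coeff ?q = 1" using Suc by blast
  have q0: "?q \<noteq> 0"
  proof
    assume "?q = 0"
    then have "lead_coeff ?q = 0" by simp
    then show False using lq by simp
  qed
  have dq: "degree (?q ^ d) = d ^ Suc j" using Suc by (simp add: degree_power_eq[OF q0])
  have "d ^ Suc j \<ge> d" using d by (simp add: self_le_power)
  then have lt: "degree [:t:] < degree (?q ^ d)" using dq d by simp
  have "degree (?q ^ d + [:t:]) = d ^ Suc j" using degree_add_eq_left[OF lt] dq by simp
  moreover have "lead_coeff (?q ^ d + [:t:]) = 1"
  proof -
    have "lead_coeff (?q ^ d + [:t:]) = lead_coeff (?q ^ d)"
      using lead_coeff_add_le[OF lt] by (metis add.commute)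
    also have "\<dots> = 1"
    proof -
      have l: "lead_coeff ?q = 1" using Suc by blast
      show ?thesis by (simp only: lead_coeff_power l) simp
    qed
    finally show ?thesis .
  qed
  ultimately show ?case by simp
qed

locale NF =
  fixes K :: "complex set"
  assumes nf: "number_field K"
begin

lemma K0: "0 \<in> K" using nf by (simp add: number_field_def)
lemma K1: "1 \<in> K" using nf by (simp add: number_field_def)
lemma Kadd: "x \<in> K \<Longrightarrow> y \<in> K \<Longrightarrow> x + y \<in> K" using nf by (simp add: number_field_def)
lemma Kmult: "x \<in> K \<Longrightarrow> y \<in> K \<Longrightarrow> x * y \<in> K" using nf by (simp add: number_field_def)
lemma Kneg: "x \<in> K \<Longrightarrow> - x \<in> K" using nf by (simp add: number_field_def)
lemma Kinv: "x \<in> K \<Longrightarrow> inverse x \<in> K"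
  using nf K0 by (cases "x = 0") (auto simp: number_field_def)

lemma Kdiff: "x \<in> K \<Longrightarrow> y \<in> K \<Longrightarrow> x - y \<in> K"
  using Kadd[OF _ Kneg[of y]] by simp

lemma Kpow: "x \<in> K \<Longrightarrow> x ^ n \<in> K"
  by (induct n) (auto simp: K1 Kmult)

lemma Ksum: "(\<And>i. i \<in> A \<Longrightarrow> g i \<in> K) \<Longrightarrow> sum g A \<in> K"
  by (induct A rule: infinite_finite_induct) (auto simp: K0 Kadd)

lemma Kprod: "(\<And>i. i \<in> A \<Longrightarrow> g i \<in> K) \<Longrightarrow> prod g A \<in> K"
  by (induct A rule: infinite_finite_induct) (auto simp: K1 Kmult)

lemma Knat: "of_nat n \<in> K"
  by (induct n) (auto simp: K0 K1 Kadd)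

lemma Kint: "of_int i \<in> K"
proof (cases i rule: int_cases)
  case (nonneg n) then show ?thesis using Knat[of n] by simp
next
  case (neg n) then show ?thesis using Kneg[OF Knat[of "Suc n"]] by simp
qed

lemma Krat: "of_rat q \<in> K"
proof -
  obtain a b where ab: "quotient_of q = (a, b)" by (cases "quotient_of q") auto
  then have "q = of_int a / of_int b" by (rule quotient_of_div)
  then have "of_rat q = (of_int a :: complex) * inverse (of_int b)"
    by (simp add: divide_inverse of_rat_mult of_rat_inverse)
  then show ?thesis using Kmult[OF Kint Kinv[OF Kint]] by simp
qed

lemma alg:
  assumes x: "x \<in> K"
  shows "\<exists>c N. (\<exists>i\<le>N. c i \<noteq> 0) \<and> (\<Sum>i\<le>N. of_rat (c i) * x ^ i) = 0"
proof -
  obtain B where B: "finite B" "B \<subseteq> K" "\<forall>y\<in>K. \<exists>c::complex \<Rightarrow> rat. y = (\<Sum>b\<in>B. of_rat (c b) * b)"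
    using nf unfolding number_field_def by blast
  have "x ^ i \<in> Q.span B" for i
  proof -
    obtain c :: "complex \<Rightarrow> rat" where "x ^ i = (\<Sum>b\<in>B. of_rat (c b) * b)" using B(3) Kpow[OF x] by blast
    also have "\<dots> = (\<Sum>b\<in>B. qs (c b) b)" by (simp add: qs_def)
    also have "\<dots> \<in> Q.span B" by (intro Q.span_sum Q.span_scale Q.span_base)
    finally show ?thesis .
  qed
  then show ?thesis using powers_dependent[OF B(1)] by blast
qed

end

locale NA = NF +
  fixes v :: "complex \<Rightarrow> real"
  assumes na: "nonarch_abs K v"
begin

lemma vnn: "x \<in> K \<Longrightarrow> v x \<ge> 0"
  and vz: "x \<in> K \<Longrightarrow> v x = 0 \<longleftrightarrow> x = 0"
  and vmult: "x \<in> K \<Longrightarrow> y \<in> K \<Longrightarrow> v (x * y) = v x * v y"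
  and vadd: "x \<in> K \<Longrightarrow> y \<in> K \<Longrightarrow> v (x + y) \<le> max (v x) (v y)"
  and nontriv: "\<exists>x\<in>K. x \<noteq> 0 \<and> v x \<noteq> 1"
  using na unfolding nonarch_abs_def by auto

lemma v0: "v 0 = 0" using vz[OF K0] by simp

lemma v1: "v 1 = 1"
proof -
  have "v 1 = v 1 * v 1" using vmult[OF K1 K1] by simp
  moreover have "v 1 \<noteq> 0" using vz[OF K1] by simp
  ultimately show ?thesis by simp
qed

lemma vm1: "v (-1) = 1"
proof -
  have "v (-1) * v (-1) = 1" using vmult[OF Kneg[OF K1] Kneg[OF K1]] v1 by simp
  then have "(v (-1))\<^sup>2 = 1" by (simp add: power2_eq_square)
  then show ?thesis using vnn[OF Kneg[OF K1]] power2_eq_1_iff by force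
qed

lemma vneg: "x \<in> K \<Longrightarrow> v (- x) = v x"
  using vmult[OF Kneg[OF K1], of x] vm1 by simp

lemma vdiff: "x \<in> K \<Longrightarrow> y \<in> K \<Longrightarrow> v (x - y) \<le> max (v x) (v y)"
  using vadd[OF _ Kneg[of y], of x] vneg[of y] by simp

lemma vsym: "x \<in> K \<Longrightarrow> y \<in> K \<Longrightarrow> v (x - y) = v (y - x)"
  using vneg[OF Kdiff[of y x]] by simp

lemma vpow: "x \<in> K \<Longrightarrow> v (x ^ n) = v x ^ n"
  by (induct n) (auto simp: v1 vmult Kpow)

lemma vprod: "(\<And>i. i \<in> A \<Longrightarrow> g i \<in> K) \<Longrightarrow> v (prod g A) = (\<Prod>i\<in>A. v (g i))"
  by (induct A rule: infinite_finite_induct) (auto simp: v1 vmult Kprod)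

lemma vnat: "v (of_nat n) \<le> 1"
proof (induct n)
  case 0 then show ?case by (simp add: v0)
next
  case (Suc n)
  have "v (of_nat n + 1) \<le> max (v (of_nat n)) (v 1)" by (rule vadd[OF Knat K1])
  then show ?case using Suc v1 by (simp add: add.commute)
qed

lemma vsum_le:
  assumes "\<And>i. i \<in> A \<Longrightarrow> g i \<in> K \<and> v (g i) \<le> B" "0 \<le> B"
  shows "v (sum g A) \<le> B"
  using assms
proof (induct A rule: infinite_finite_induct)
  case (insert a A)
  have s1: "v (g a + sum g A) \<le> max (v (g a)) (v (sum g A))"
    using insert by (intro vadd Ksum) auto
  have s2: "v (g a) \<le> B" using insert.prems(1)[of a] by simp
  have s3: "v (sum g A) \<le> B" using insert by simp
  have "max (v (g a)) (v (sum g A)) \<le> B" using s2 s3 by simp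
  then have "v (g a + sum g A) \<le> B" by (rule order_trans[OF s1])
  then show ?case using insert.hyps(1,2) by simp
qed (auto simp: v0)

lemma vsum_less:
  assumes "\<And>i. i \<in> A \<Longrightarrow> g i \<in> K \<and> v (g i) < B" "0 < B"
  shows "v (sum g A) < B"
  using assms
proof (induct A rule: infinite_finite_induct)
  case (insert a A)
  have s1: "v (g a + sum g A) \<le> max (v (g a)) (v (sum g A))"
    using insert by (intro vadd Ksum) auto
  have s2: "v (g a) < B" using insert.prems(1)[of a] by simp
  have s3: "v (sum g A) < B" using insert by simp
  have "max (v (g a)) (v (sum g A)) < B" using s2 s3 by simp
  then have "v (g a + sum g A) < B" by (rule le_less_trans[OF s1])
  then show ?case using insert.hyps(1,2) by simp
qed (auto simp: v0)

lemma vdom: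
  assumes x: "x \<in> K" and y: "y \<in> K" and lt: "v y < v x"
  shows "v (x + y) = v x"
proof -
  have le: "v (x + y) \<le> v x" using vadd[OF x y] lt by simp
  have "v x = v ((x + y) - y)" by simp
  also have "\<dots> \<le> max (v (x + y)) (v y)" by (rule vdiff[OF Kadd[OF x y] y])
  finally have "v x \<le> v (x + y)" using lt by auto
  with le show ?thesis by simp
qed

lemma vinv: "x \<in> K \<Longrightarrow> x \<noteq> 0 \<Longrightarrow> v (inverse x) * v x = 1"
  using vmult[OF Kinv, of x x] v1 by simp

lemma vint: "a \<noteq> 0 \<Longrightarrow> (\<forall>n>0. v (of_nat n) = 1) \<Longrightarrow> v (of_int a) = 1"
proof (cases a rule: int_cases)
  case (nonneg n)
  assume "a \<noteq> 0" "\<forall>n>0. v (of_nat n) = 1"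
  then show ?thesis using nonneg by simp
next
  case (neg n)
  assume "\<forall>n>0. v (of_nat n) = 1"
  then show ?thesis using neg vneg[OF Knat[of "Suc n"]] spec[OF \<open>\<forall>n>0. v (of_nat n) = 1\<close>, of "Suc n"]
    by simp
qed

lemma vrat: assumes "q \<noteq> 0" "\<forall>n>0. v (of_nat n) = 1" shows "v (of_rat q) = 1"
proof -
  obtain a b where ab: "quotient_of q = (a, b)" by (cases "quotient_of q") auto
  then have q: "q = of_int a / of_int b" by (rule quotient_of_div)
  have b: "b > 0" using ab quotient_of_denom_pos by blast
  have a: "a \<noteq> 0" using q assms(1) by auto
  have "of_rat q * of_int b = (of_int a :: complex)" using q b by (simp add: of_rat_divide)
  then have "v (of_rat q) * v (of_int b) = v (of_int a)" using vmult[OF Krat Kint] by metis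
  then show ?thesis using vint[OF a assms(2)] vint[of b] b assms(2) by simp
qed

lemma big_impossible:
  assumes triv: "\<forall>n>0. v (of_nat n) = 1" and x: "x \<in> K" and vx: "v x > 1"
  shows False
proof -
  obtain c N where cN: "\<exists>i\<le>N. c i \<noteq> 0" "(\<Sum>i\<le>N. of_rat (c i) * x ^ i) = 0"
    using alg[OF x] by blast
  have vc: "v (of_rat (c i)) \<le> 1" for i
    using vrat[OF _ triv, of "c i"] by (cases "c i = 0") (auto simp: v0)
  have "(\<exists>i\<le>M. c i \<noteq> 0) \<longrightarrow> (\<Sum>i\<le>M. of_rat (c i) * x ^ i) \<noteq> 0" for M
  proof (induct M)
    case 0 then show ?case by simp
  next
    case (Suc M)
    show ?case
    proof (cases "c (Suc M) = 0")
      case True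
      then show ?thesis using Suc by (auto simp: le_Suc_eq)
    next
      case False
      let ?T = "of_rat (c (Suc M)) * x ^ Suc M" and ?R = "\<Sum>i\<le>M. of_rat (c i) * x ^ i"
      have vT: "v ?T = v x ^ Suc M"
      proof -
        have "v ?T = v (of_rat (c (Suc M))) * v (x ^ Suc M)" by (rule vmult[OF Krat Kpow[OF x]])
        also have "\<dots> = v x ^ Suc M" by (simp only: vrat[OF False triv] vpow[OF x])
        finally show ?thesis .
      qed
      have vR: "v ?R < v x ^ Suc M"
      proof (rule vsum_less)
        fix i assume "i \<in> {..M}"
        then have i: "i \<le> M" by simp
        have "v (of_rat (c i) * x ^ i) = v (of_rat (c i)) * v x ^ i"
          using vmult[OF Krat Kpow[OF x]] vpow[OF x] by simp
        also have "\<dots> \<le> v x ^ i" using vc[of i] vx vnn[OF Krat, of "c i"] by (intro mult_left_le_one_le) auto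
        also have "\<dots> < v x ^ Suc M" using vx i by (intro power_strict_increasing) auto
        finally show "of_rat (c i) * x ^ i \<in> K \<and> v (of_rat (c i) * x ^ i) < v x ^ Suc M"
          using Kmult[OF Krat Kpow[OF x]] by simp
      qed (use vx in auto)
      have TK: "?T \<in> K" by (intro Kmult Krat Kpow x)
      have RK: "?R \<in> K" by (intro Ksum Kmult Krat Kpow x)
      have "v (?T + ?R) = v ?T" by (rule vdom[OF TK RK]) (use vR vT in linarith)
      then have "v (?T + ?R) > 0" using vT vx by simp
      then have "?T + ?R \<noteq> 0" using v0 by auto
      then show ?thesis by (simp add: add.commute)
    qed
  qed
  with cN show False by blast
qed

lemma exists_small: "\<exists>n>0. v (of_nat n) < 1"
proof (rule ccontr)
  assume ns: "\<not> (\<exists>n>0. v (of_nat n) < 1)"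
  have triv: "\<forall>n>0. v (of_nat n) = 1"
  proof (intro allI impI)
    fix n :: nat assume "n > 0"
    then have "\<not> v (of_nat n) < 1" using ns by blast
    then show "v (of_nat n) = 1" using vnat[of n] by simp
  qed
  obtain x where x: "x \<in> K" "x \<noteq> 0" "v x \<noteq> 1" using nontriv by blast
  show False
  proof (cases "v x > 1")
    case True then show False using big_impossible[OF triv x(1)] by simp
  next
    case False
    then have lt: "v x < 1" using x(3) by simp
    have pos: "v x > 0" using vz[OF x(1)] vnn[OF x(1)] x(2) by simp
    have vi: "v (inverse x) * v x = 1" by (rule vinv[OF x(1,2)])
    have "v (inverse x) > 1"
    proof (rule ccontr)
      assume "\<not> v (inverse x) > 1"
      then have "v (inverse x) \<le> 1" by simp
      then have "v (inverse x) * v x \<le> 1 * v x" using pos by (intro mult_right_mono) auto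
      then show False using lt vi by simp
    qed
    then show False using big_impossible[OF triv Kinv[OF x(1)]] by simp
  qed
qed

lemma rc:
  "0 < residual_char v \<and> v (of_nat (residual_char v)) < 1 \<and>
   (\<forall>m. 0 < m \<and> v (of_nat m) < 1 \<longrightarrow> residual_char v \<le> m)"
proof -
  have ex: "\<exists>n. 0 < n \<and> v (of_nat n) < 1" using exists_small by blast
  have 1: "0 < (LEAST n. 0 < n \<and> v (of_nat n) < 1) \<and> v (of_nat (LEAST n. 0 < n \<and> v (of_nat n) < 1)) < 1"
    by (rule LeastI_ex[OF ex])
  have 2: "\<And>m. 0 < m \<and> v (of_nat m) < 1 \<Longrightarrow> (LEAST n. 0 < n \<and> v (of_nat n) < 1) \<le> m"
    by (rule Least_le)
  show ?thesis unfolding residual_char_def using 1 2 by blast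
qed

lemma rc_dvd:
  assumes "residual_char v dvd d" "d > 0"
  shows "v (of_nat d) < 1"
proof -
  let ?p = "residual_char v"
  obtain k where k: "d = ?p * k" using assms(1) by blast
  have "v (of_nat d) = v (of_nat ?p) * v (of_nat k)" using k vmult[OF Knat Knat] by simp
  also have "\<dots> \<le> v (of_nat ?p)" using vnat[of k] vnn[OF Knat] by (intro mult_left_le) auto
  finally show ?thesis using rc by simp
qed

lemma rc_coprime:
  assumes "coprime (residual_char v) d" "d > 0"
  shows "v (of_nat d) = 1"
proof (rule ccontr)
  let ?p = "residual_char v"
  assume "v (of_nat d) \<noteq> 1"
  then have vd: "v (of_nat d) < 1" using vnat[of d] by simp
  have p: "0 < ?p" "v (of_nat ?p) < 1" "\<And>m. 0 < m \<Longrightarrow> v (of_nat m) < 1 \<Longrightarrow> ?p \<le> m"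
    using rc by auto
  have "d mod ?p = 0"
  proof (rule ccontr)
    assume nz: "d mod ?p \<noteq> 0"
    have eq: "(of_nat (d mod ?p) :: complex) = of_nat d - of_nat ?p * of_nat (d div ?p)"
    proof -
      have h: "(of_nat d :: complex) = of_nat (d mod ?p) + of_nat ?p * of_nat (d div ?p)"
        by (simp only: of_nat_add[symmetric] of_nat_mult[symmetric] mod_mult_div_eq)
      show ?thesis using h by simp
    qed
    have "v (of_nat ?p * of_nat (d div ?p) :: complex) \<le> v (of_nat ?p)"
      using vmult[OF Knat Knat, of ?p "d div ?p"] vnat[of "d div ?p"] vnn[OF Knat, of ?p]
      by (simp add: mult_left_le)
    then have "v (of_nat (d mod ?p)) < 1"
      unfolding eq using vdiff[OF Knat Kmult[OF Knat Knat], of d ?p "d div ?p"] vd p(2) by linarith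
    then have "?p \<le> d mod ?p" using p(3) nz by auto
    moreover have "d mod ?p < ?p" using p(1) by simp
    ultimately show False by simp
  qed
  then have pd: "?p dvd d" by auto
  have "?p = 1" by (rule coprime_common_divisor_nat[OF assms(1) dvd_refl pd])
  then show False using p(2) v1 by simp
qed

lemma zeta:
  assumes x: "x \<in> K" and y: "y \<in> K" and eq: "x ^ d = y ^ d" and ne: "x \<noteq> y" and y0: "y \<noteq> 0"
    and vd: "v (of_nat d) = 1"
  shows "v y \<le> v (x - y)"
proof -
  have d0: "d > 0" using vd v0 by (cases d) auto
  define z where "z = x * inverse y"
  have zK: "z \<in> K" using x y by (simp add: z_def Kmult Kinv)
  have zy: "z * y = x" using y0 by (simp add: z_def)
  have zd: "z ^ d = 1" using eq y0 by (simp add: z_def power_mult_distrib power_inverse)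
  have z1: "z \<noteq> 1" using zy ne by auto
  have vz1: "v z = 1"
  proof -
    have "v z ^ d = 1 ^ d" using vpow[OF zK, of d] zd v1 by simp
    then show ?thesis using power_eq_imp_eq_base[of "v z" d 1] vnn[OF zK] d0 by simp
  qed
  have "z ^ d - 1 ^ d = (z - 1) * (\<Sum>i<d. 1 ^ (d - Suc i) * z ^ i)" by (rule power_diff_sumr2)
  then have geo: "(\<Sum>i<d. z ^ i) = 0" using zd z1 by simp
  define W where "W = (\<Sum>k<d. \<Sum>i<k. z ^ (k - Suc i))"
  have "(of_nat d :: complex) = (\<Sum>k<d. (1 - z ^ k))" using geo by (simp add: sum_subtractf)
  also have "\<dots> = (\<Sum>k<d. (1 - z) * (\<Sum>i<k. z ^ (k - Suc i)))"
  proof (rule sum.cong[OF refl])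
    fix k
    have "1 ^ k - z ^ k = (1 - z) * (\<Sum>i<k. z ^ (k - Suc i) * 1 ^ i)" by (rule power_diff_sumr2)
    then show "1 - z ^ k = (1 - z) * (\<Sum>i<k. z ^ (k - Suc i))" by simp
  qed
  also have "\<dots> = (1 - z) * W" by (simp add: W_def sum_distrib_left)
  finally have dW: "of_nat d = (1 - z) * W" .
  have WK: "W \<in> K" unfolding W_def by (intro Ksum Kpow zK)
  have vW: "v W \<le> 1" unfolding W_def
    by (intro vsum_le conjI Ksum Kpow zK) (auto simp: vpow[OF zK] vz1)
  have z1K: "1 - z \<in> K" by (intro Kdiff K1 zK)
  have "1 = v (1 - z) * v W" using vd dW vmult[OF z1K WK] by simp
  also have "\<dots> \<le> v (1 - z)" using vW vnn[OF z1K] by (intro mult_left_le) auto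
  finally have vz1': "1 \<le> v (1 - z)" .
  have "x - y = - ((1 - z) * y)" using zy by (simp add: algebra_simps)
  then have "v (x - y) = v (1 - z) * v y" using vneg[OF Kmult[OF z1K y]] vmult[OF z1K y] by simp
  also have "\<dots> \<ge> 1 * v y" using vz1' vnn[OF y] by (intro mult_right_mono) auto
  finally show ?thesis by simp
qed

end

locale NAD = NA +
  fixes d :: nat and t :: complex and f :: "complex \<Rightarrow> complex"
  assumes d2: "d \<ge> 2" and tK: "t \<in> K" and f_eq: "\<And>x. f x = x ^ d + t"
begin

lemma fK: "x \<in> K \<Longrightarrow> f x \<in> K"
  by (simp add: f_eq Kadd Kpow tK)

lemma iterK: "x \<in> K \<Longrightarrow> (f ^^ j) x \<in> K"
  by (induct j) (auto simp: fK)

lemma grow: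
  assumes x: "x \<in> K" and vx: "v x > 1" and vt: "v t \<le> v x"
  shows "v x < v (f x)"
proof -
  have "v x ^ 1 < v x ^ d" using vx d2 by (intro power_strict_increasing) auto
  then have lt: "v x < v (x ^ d)" using vpow[OF x] by simp
  have "v (x ^ d + t) = v (x ^ d)" using lt vt by (intro vdom Kpow x tK) auto
  then show ?thesis using lt by (simp add: f_eq)
qed

lemma vt_le:
  assumes fin: "finite (range (\<lambda>m. (f ^^ m) 0))"
  shows "v t \<le> 1"
proof (rule ccontr)
  assume "\<not> v t \<le> 1"
  then have vt: "v t > 1" by simp
  define a where "a m = (f ^^ m) 0" for m
  have aK: "a m \<in> K" for m unfolding a_def by (intro iterK K0)
  have a1: "a 1 = t" using d2 by (simp add: a_def f_eq power_0_left)
  have aS: "a (Suc m) = f (a m)" for m by (simp add: a_def)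
  have claim: "v t \<le> v (a (Suc m)) \<and> v (a (Suc m)) < v (a (Suc (Suc m)))" for m
  proof (induct m)
    case 0
    then show ?case using grow[OF aK[of 1]] a1 vt aS[of 1] by simp
  next
    case (Suc m)
    then have "v t \<le> v (a (Suc (Suc m)))" by simp
    moreover then have "v (a (Suc (Suc m))) < v (a (Suc (Suc (Suc m))))"
      using grow[OF aK[of "Suc (Suc m)"]] vt aS[of "Suc (Suc m)"] by simp
    ultimately show ?case by simp
  qed
  define h where "h m = v (a (Suc m))" for m
  have "strict_mono h" unfolding strict_mono_Suc_iff h_def using claim by simp
  then have ih: "inj h" by (rule strict_mono_imp_inj_on)
  have "inj (\<lambda>m. a (Suc m))"
  proof (rule injI)
    fix m m' assume "a (Suc m) = a (Suc m')"
    then have "h m = h m'" by (simp add: h_def)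
    then show "m = m'" using ih by (simp add: inj_def)
  qed
  moreover have "finite (range (\<lambda>m. a (Suc m)))"
  proof -
    have fa: "finite (range a)" using fin by (simp add: a_def)
    have "range (\<lambda>m. a (Suc m)) \<subseteq> range a" by auto
    then show ?thesis using fa by (rule finite_subset)
  qed
  ultimately have "finite (UNIV :: nat set)" using finite_imageD by blast
  then show False by simp
qed

lemma iter_le1:
  assumes vt: "v t \<le> 1" and x: "x \<in> K" and vx: "v x \<le> 1"
  shows "v ((f ^^ j) x) \<le> 1"
proof (induct j)
  case 0 then show ?case using vx by simp
next
  case (Suc j)
  let ?y = "(f ^^ j) x"
  have yK: "?y \<in> K" by (rule iterK[OF x])
  have "v (?y ^ d) \<le> 1" using vpow[OF yK] Suc vnn[OF yK] by (simp add: power_le_one)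
  then have m: "max (v (?y ^ d)) (v t) \<le> 1" using vt by simp
  have "v (?y ^ d + t) \<le> 1" using order_trans[OF vadd[OF Kpow[OF yK, of d] tK] m] .
  then show ?case using f_eq[of ?y] by simp
qed

lemma per_le1:
  assumes vt: "v t \<le> 1" and x: "x \<in> K" and n: "n > 0" and per: "(f ^^ n) x = x"
  shows "v x \<le> 1"
proof (rule ccontr)
  assume "\<not> v x \<le> 1"
  then have vx: "v x > 1" by simp
  have "v x < v ((f ^^ Suc j) x)" for j
  proof (induct j)
    case 0 then show ?case using grow[OF x vx] vt vx by simp
  next
    case (Suc j)
    let ?y = "(f ^^ Suc j) x"
    have y1: "1 < v ?y" using Suc vx by simp
    have "v ?y < v (f ?y)" using grow[OF iterK[OF x, of "Suc j"] y1] vt y1 by simp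
    then show ?case using Suc by simp
  qed
  from this[of "n - 1"] n per show False by simp
qed

lemma contract:
  assumes x: "x \<in> K" and y: "y \<in> K" and vx: "v x \<le> 1" and vy: "v y \<le> 1"
  shows "v (f x - f y) \<le> v (x - y)"
    and "v x < 1 \<Longrightarrow> v y < 1 \<Longrightarrow> x \<noteq> y \<Longrightarrow> v (f x - f y) < v (x - y)"
proof -
  define S where "S = (\<Sum>i<d. y ^ (d - Suc i) * x ^ i)"
  have SK: "S \<in> K" unfolding S_def by (intro Ksum Kmult Kpow x y)
  have "f x - f y = x ^ d - y ^ d" by (simp add: f_eq)
  also have "\<dots> = (x - y) * S" unfolding S_def by (rule power_diff_sumr2)
  finally have eq: "v (f x - f y) = v (x - y) * v S" using vmult[OF Kdiff[OF x y] SK] by simp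
  have tv: "v (y ^ (d - Suc i) * x ^ i) = v y ^ (d - Suc i) * v x ^ i" for i
    using vmult[OF Kpow[OF y] Kpow[OF x]] vpow[OF x] vpow[OF y] by simp
  have vS: "v S \<le> 1" unfolding S_def
  proof (rule vsum_le)
    fix i
    have "v y ^ (d - Suc i) * v x ^ i \<le> 1"
      using vx vy vnn[OF x] vnn[OF y] by (intro mult_le_one power_le_one) auto
    then show "y ^ (d - Suc i) * x ^ i \<in> K \<and> v (y ^ (d - Suc i) * x ^ i) \<le> 1"
      using tv Kmult[OF Kpow[OF y] Kpow[OF x]] by simp
  qed simp
  show "v (f x - f y) \<le> v (x - y)"
    using eq vS vnn[OF Kdiff[OF x y]] by (simp add: mult_left_le)
  assume vx1: "v x < 1" and vy1: "v y < 1" and ne: "x \<noteq> y"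
  have vS1: "v S < 1" unfolding S_def
  proof (rule vsum_less)
    fix i assume "i \<in> {..<d}"
    then have i: "i < d" by simp
    have "v y ^ (d - Suc i) * v x ^ i < 1"
    proof (cases i)
      case 0
      have "v y ^ (d - Suc 0) \<le> v y ^ 1" using d2 vnn[OF y] vy
        by (intro power_decreasing) auto
      then show ?thesis using 0 vy1 by simp
    next
      case (Suc i')
      have "v x ^ i \<le> v x ^ 1" using Suc vnn[OF x] vx by (intro power_decreasing) auto
      then have "v x ^ i < 1" using vx1 by simp
      moreover have "v y ^ (d - Suc i) \<le> 1" using vy vnn[OF y] by (intro power_le_one) auto
      moreover have "v y ^ (d - Suc i) * v x ^ i \<le> v x ^ i"
        using vnn[OF x] vnn[OF y] \<open>v y ^ (d - Suc i) \<le> 1\<close>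
        by (intro mult_left_le_one_le) auto
      ultimately show ?thesis by simp
    qed
    then show "y ^ (d - Suc i) * x ^ i \<in> K \<and> v (y ^ (d - Suc i) * x ^ i) < 1"
      using tv Kmult[OF Kpow[OF y] Kpow[OF x]] by simp
  qed simp
  have "v (x - y) > 0" using vz[OF Kdiff[OF x y]] vnn[OF Kdiff[OF x y]] ne by auto
  then show "v (f x - f y) < v (x - y)" using eq vS1 by simp
qed

lemma all_units:
  assumes vd: "v (of_nat d) = 1" and vt: "v t \<le> 1"
    and fin: "finite (range (\<lambda>m. (f ^^ m) 0))"
    and z0: "z0 \<in> K" and n: "n > 0" and per: "(f ^^ n) z0 = z0"
    and nz: "\<And>j. j < n \<Longrightarrow> (f ^^ j) z0 \<noteq> 0"
  shows "1 \<le> v ((f ^^ j) z0)"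
proof (rule ccontr)
  assume "\<not> 1 \<le> v ((f ^^ j) z0)"
  then have small: "v ((f ^^ j) z0) < 1" by simp
  have perk: "(f ^^ (k * n + r)) z0 = (f ^^ r) z0" for k r
  proof (induct k)
    case 0 then show ?case by simp
  next
    case (Suc k)
    have "Suc k * n + r = (k * n + r) + n" by simp
    then have "(f ^^ (Suc k * n + r)) z0 = (f ^^ (k * n + r)) ((f ^^ n) z0)"
      by (simp only: funpow_add comp_apply)
    then show ?case using Suc per by simp
  qed
  have modj: "(f ^^ i) z0 = (f ^^ (i mod n)) z0" for i
    using perk[of "i div n" "i mod n"] by simp
  define C where "C = (\<lambda>j. (f ^^ j) z0) ` {..<n}"
  have inC: "(f ^^ i) z0 \<in> C" for i
    unfolding C_def using modj[of i] n by auto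
  have Cnz: "c \<in> C \<Longrightarrow> c \<noteq> 0" for c unfolding C_def using nz by auto
  have CK: "c \<in> C \<Longrightarrow> c \<in> K" for c unfolding C_def using iterK[OF z0] by auto
  have finC: "finite C" unfolding C_def by simp
  have neC: "C \<noteq> {}" using inC by auto
  have "Min (v ` C) \<in> v ` C" using finC neC by (intro Min_in) auto
  then obtain z where zC: "z \<in> C" and zmin_eq: "v z = Min (v ` C)" by auto
  have zmin: "\<And>c. c \<in> C \<Longrightarrow> v z \<le> v c" using zmin_eq finC by simp
  have vz1: "v z < 1" using zmin[OF inC[of j]] small by simp
  have zK: "z \<in> K" and z0': "z \<noteq> 0" using zC CK Cnz by auto
  obtain i0 where i0: "z = (f ^^ i0) z0" using zC unfolding C_def by auto
  define w where "w m = (f ^^ m) z" for m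
  have wC: "w m \<in> C" for m
  proof -
    have "w m = (f ^^ (m + i0)) z0" by (simp add: w_def i0 funpow_add)
    then show ?thesis using inC by simp
  qed
  have wn: "w (k * n) = z" for k
  proof -
    have "w (k * n) = (f ^^ (k * n + i0)) z0" by (simp add: w_def i0 funpow_add)
    then show ?thesis using perk i0 by simp
  qed
  have wK: "w m \<in> K" for m using wC CK by blast
  have wmin: "v z \<le> v (w m)" for m using zmin wC by blast
  have wnz: "w m \<noteq> 0" for m using wC Cnz by blast
  have vw1: "v (w m) \<le> 1" for m unfolding w_def using iter_le1[OF vt zK] vz1 by simp
  define a where "a m = (f ^^ m) 0" for m
  have aK: "a m \<in> K" for m unfolding a_def by (intro iterK K0)
  have va1: "v (a m) \<le> 1" for m unfolding a_def using iter_le1[OF vt K0] v0 by simp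
  define E where "E m = v (a m - w m)" for m
  have aS: "a (Suc m) = f (a m)" and wS: "w (Suc m) = f (w m)" for m
    by (simp_all add: a_def w_def)
  have Esuc: "E (Suc m) \<le> E m" for m
    unfolding E_def aS wS by (rule contract(1)[OF aK wK va1 vw1])
  have Emono: "m \<le> m' \<Longrightarrow> E m' \<le> E m" for m m'
  proof (induct m' rule: dec_induct)
    case base then show ?case by simp
  next
    case (step k) then show ?case using Esuc[of k] by simp
  qed
  have a0: "a 0 = 0" and w0: "w 0 = z" by (simp_all add: a_def w_def)
  have E0: "E 0 = v z" unfolding E_def a0 w0 using vneg[OF zK] by simp
  have E1: "E (Suc 0) < E 0"
  proof -
    have c: "v (f (a 0) - f (w 0)) < v (a 0 - w 0)"
      by (rule contract(2)[OF aK wK va1 vw1]) (use z0' vz1 in \<open>auto simp: a0 w0 v0\<close>)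
    show ?thesis unfolding E_def aS wS using c .
  qed
  have Eblock: "E (Suc k * n) < E (k * n)" if ne: "a (k * n) \<noteq> z" for k
  proof -
    have Ek: "E (k * n) \<le> v z" using Emono[of 0 "k * n"] E0 by simp
    have "a (k * n) = (a (k * n) - z) + z" by simp
    then have "v (a (k * n)) \<le> max (v (a (k * n) - z)) (v z)"
      using vadd[OF Kdiff[OF aK zK] zK] by metis
    then have va: "v (a (k * n)) < 1" using Ek vz1 wn[of k] by (simp add: E_def)
    have "v (f (a (k * n)) - f (w (k * n))) < v (a (k * n) - w (k * n))"
      by (rule contract(2)[OF aK wK va1 vw1]) (use va wn[of k] vz1 ne in auto)
    then have "E (Suc (k * n)) < E (k * n)" unfolding E_def aS wS .
    moreover have "E (Suc k * n) \<le> E (Suc (k * n))" using n by (intro Emono) simp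
    ultimately show ?thesis by simp
  qed
  have ex: "\<exists>m. a m = w m"
  proof (rule ccontr)
    assume "\<not> ?thesis"
    then have ne: "a (k * n) \<noteq> z" for k using wn[of k] by metis
    define g where "g k = - E (k * n)" for k
    have "strict_mono g" unfolding strict_mono_Suc_iff g_def using Eblock ne by simp
    then have ig: "inj g" by (rule strict_mono_imp_inj_on)
    have "range g \<subseteq> (\<lambda>x. - v (x - z)) ` range a"
      unfolding g_def E_def using wn by auto
    moreover have "finite (range a)" using fin by (simp add: a_def)
    ultimately have "finite (range g)" by (meson finite_imageI finite_subset)
    then have "finite (UNIV :: nat set)" using finite_imageD ig by blast
    then show False by simp
  qed
  define m0 where "m0 = (LEAST m. a m = w m)"
  have am0: "a m0 = w m0" unfolding m0_def using ex by (rule LeastI_ex)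
  have "m0 \<noteq> 0"
  proof
    assume "m0 = 0"
    then have "a 0 = w 0" using am0 by simp
    then show False using a0 w0 z0' by simp
  qed
  then obtain m1 where m1: "m0 = Suc m1" by (cases m0) auto
  have ne1: "a m1 \<noteq> w m1" using not_less_Least[of m1 "\<lambda>m. a m = w m"] m1 m0_def by auto
  have "f (a m1) = f (w m1)" using am0 m1 aS wS by simp
  then have eqd: "a m1 ^ d = w m1 ^ d" by (simp add: f_eq)
  have "v (w m1) \<le> E m1" unfolding E_def by (rule zeta[OF aK wK eqd ne1 wnz vd])
  then have Ez: "v z \<le> E m1" using wmin[of m1] by simp
  show False
  proof (cases m1)
    case 0
    then have "z ^ d = 0" using eqd a0 w0 d2 by (simp add: power_0_left)
    then show False using z0' by simp
  next
    case (Suc m2)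
    then have "E m1 \<le> E (Suc 0)" by (intro Emono) simp
    then show False using E1 E0 Ez by simp
  qed
qed

end

lemma deriv_iter:
  fixes t :: complex
  shows "(((\<lambda>x. x ^ d + t) ^^ n) has_field_derivative
           (\<Prod>j<n. of_nat d * (((\<lambda>x. x ^ d + t) ^^ j) x) ^ (d - 1))) (at x)"
proof (induct n)
  case 0
  show ?case by (simp add: id_def DERIV_ident)
next
  case (Suc n)
  let ?f = "\<lambda>x::complex. x ^ d + t"
  have df: "(?f has_field_derivative of_nat d * y ^ (d - 1)) (at y)" for y
    by (auto intro!: derivative_eq_intros)
  have eq1: "(?f ^^ Suc n) = ?f \<circ> (?f ^^ n)" by (rule funpow.simps(2))
  have eq2: "(\<Prod>j<Suc n. of_nat d * ((?f ^^ j) x) ^ (d - 1)) =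
      (of_nat d * ((?f ^^ n) x) ^ (d - 1)) * (\<Prod>j<n. of_nat d * ((?f ^^ j) x) ^ (d - 1))"
    by (simp only: prod.lessThan_Suc mult.commute)
  show ?case unfolding eq1 eq2 by (rule DERIV_chain[OF df Suc])
qed

lemma field_exists:
  fixes t z0 :: complex
  assumes d2: "d \<ge> 2" and fin: "finite (range (\<lambda>m. ((\<lambda>x. x ^ d + t) ^^ m) 0))"
    and n: "n > 0" and per: "((\<lambda>x. x ^ d + t) ^^ n) z0 = z0"
  shows "\<exists>K. number_field K \<and> t \<in> K \<and> z0 \<in> K"
proof -
  define f where "f = (\<lambda>x::complex. x ^ d + t)"
  have fin: "finite (range (\<lambda>m. (f ^^ m) 0))" using fin by (simp add: f_def)
  have per: "(f ^^ n) z0 = z0" using per by (simp add: f_def)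
  have "\<not> inj (\<lambda>m. (f ^^ m) 0)"
  proof
    assume "inj (\<lambda>m. (f ^^ m) 0)"
    then have "finite (UNIV :: nat set)" using finite_imageD fin by blast
    then show False by simp
  qed
  then obtain a b where ab: "a < b" "(f ^^ a) 0 = (f ^^ b) 0"
    unfolding inj_def by (metis linorder_neqE_nat)
  obtain b' where b': "b = Suc b'" using ab(1) by (cases b) auto
  define p where "p = Pt d b - Pt d a"
  have dPb: "degree (Pt d b) = d ^ b'" "lead_coeff (Pt d b) = 1" using deg_Pt[OF d2, of b'] b' by auto
  have degp: "degree p = d ^ b' \<and> lead_coeff p = 1"
  proof (cases a)
    case 0
    then show ?thesis using dPb by (simp add: p_def)
  next
    case (Suc a')
    then have "a' < b'" using ab b' by simp
    then have "d ^ a' < d ^ b'" using d2 by (intro power_strict_increasing) auto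
    then have lt: "degree (- Pt d a) < degree (Pt d b)" using deg_Pt[OF d2, of a'] Suc dPb
      by (simp del: Pt.simps)
    have pe: "p = - Pt d a + Pt d b" by (simp add: p_def)
    show ?thesis unfolding pe using degree_add_eq_left[OF lt] lead_coeff_add_le[OF lt] dPb
      by (simp del: Pt.simps add: add.commute)
  qed
  have pt: "poly p t = 0" using ab(2) by (simp add: p_def poly_Pt f_def)
  have cp: "cin (Q.span {1}) p" unfolding p_def by (intro cin_diff cin_Pt finring_one)
  have relt: "t ^ (d ^ b') = (\<Sum>k<d ^ b'. (- coeff p k) * t ^ k)"
    using monic_rel[OF _ _ pt] degp by blast
  define S1 where "S1 = (\<lambda>(s,i). s * t ^ i) ` ({1} \<times> {..<d ^ b'})"
  have dpos: "d ^ b' > 0" using d2 by simp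
  have S1: "finring S1" "Q.span {1} \<subseteq> Q.span S1" "t \<in> Q.span S1"
    using adjoin[OF finring_one dpos _ relt] cp unfolding S1_def cin_def
    by (auto intro: Q.span_neg)
  define q where "q = Gz d t n - [:0,1:]"
  have dn: "d ^ n \<ge> 2" using d2 n
    by (metis le_trans self_le_power less_imp_le_nat not_gr0 one_less_numeral_iff semiring_norm(76) zero_less_numeral less_le_trans)
  have degq: "degree q = d ^ n \<and> lead_coeff q = 1"
  proof -
    have g1: "degree (Gz d t n) = d ^ n" and g2: "coeff (Gz d t n) (d ^ n) = 1"
      using deg_Gz[OF d2, of t n] by auto
    have lt: "degree (- [:0,1::complex:]) < degree (Gz d t n)" using deg_Gz[OF d2, of t n] dn by simp
    have qe: "q = - [:0,1:] + Gz d t n" by (simp add: q_def)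
    show ?thesis unfolding qe using degree_add_eq_left[OF lt] lead_coeff_add_le[OF lt] g1 g2
      by (simp add: add.commute)
  qed
  have qz: "poly q z0 = 0" using per by (simp add: q_def poly_Gz f_def)
  have cq: "cin (Q.span S1) q" unfolding q_def by (intro cin_diff cin_Gz cin_X S1)
  have relz: "z0 ^ (d ^ n) = (\<Sum>k<d ^ n. (- coeff q k) * z0 ^ k)"
    using monic_rel[OF _ _ qz] degq by blast
  define S2 where "S2 = (\<lambda>(s,i). s * z0 ^ i) ` (S1 \<times> {..<d ^ n})"
  have dpos2: "d ^ n > 0" using d2 by simp
  have S2: "finring S2" "Q.span S1 \<subseteq> Q.span S2" "z0 \<in> Q.span S2"
    using adjoin[OF S1(1) dpos2 _ relz] cq unfolding S2_def cin_def
    by (auto intro: Q.span_neg)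
  define K where "K = Q.span S2"
  have nfK: "number_field K" unfolding K_def by (rule mk_nf[OF S2(1)])
  have tK: "t \<in> K" using S1(3) S2(2) unfolding K_def by auto
  have z0K: "z0 \<in> K" using S2(3) unfolding K_def by auto
  show ?thesis using nfK tK z0K by blast
qed

theorem proposition5p4:
  fixes d :: nat and t lam :: complex
  assumes "d \<ge> 2"
    and "post_critically_finite (monom 1 d + [:t:])"
    and "periodic_multiplier (monom 1 d + [:t:]) lam"
    and "lam \<noteq> 0"
  shows "\<exists>K. number_field K \<and> lam \<in> K \<and>
     (\<forall>v. nonarch_abs K v \<longrightarrow>
        (residual_char v dvd d \<longrightarrow> v lam < 1) \<and>
        (coprime (residual_char v) d \<longrightarrow> v lam = 1))"
proof -
  define f where "f = (\<lambda>x::complex. x ^ d + t)"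
  have d2: "d \<ge> 2" by fact
  have polyF: "poly (monom 1 d + [:t:]) = f" by (rule ext) (simp add: f_def poly_monom)
  obtain z0 n where n: "n > 0" and per: "(f ^^ n) z0 = z0"
    and lam0: "lam = deriv (f ^^ n) z0"
    using assms(3) unfolding periodic_multiplier_def polyF by blast
  have lam: "lam = (\<Prod>j<n. of_nat d * ((f ^^ j) z0) ^ (d - 1))"
    unfolding lam0 f_def by (rule DERIV_imp_deriv[OF deriv_iter])
  have "poly (pderiv (monom 1 d + [:t:])) 0 = 0"
  proof -
    have "(f has_field_derivative of_nat d * 0 ^ (d - 1)) (at 0)"
      unfolding f_def by (auto intro!: derivative_eq_intros)
    then have "(f has_field_derivative 0) (at 0)" using d2 by (simp add: power_0_left)
    moreover have "(f has_field_derivative poly (pderiv (monom 1 d + [:t:])) 0) (at 0)"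
      using poly_DERIV[of "monom 1 d + [:t:]" 0] polyF by simp
    ultimately show ?thesis using DERIV_unique by blast
  qed
  then have fin: "finite (range (\<lambda>m. (f ^^ m) 0))"
    using assms(2) unfolding post_critically_finite_def polyF by blast
  have nz: "(f ^^ j) z0 \<noteq> 0" if "j < n" for j
  proof
    assume "(f ^^ j) z0 = 0"
    then have "of_nat d * ((f ^^ j) z0) ^ (d - 1) = 0" using d2 by (simp add: power_0_left)
    then have "lam = 0" unfolding lam using that by (intro prod_zero) auto
    then show False using assms(4) by simp
  qed
  obtain K where nfK: "number_field K" and tK: "t \<in> K" and z0K: "z0 \<in> K"
    using field_exists[OF d2 _ n, of t z0] fin per unfolding f_def by blast
  interpret NF K by (rule NF.intro[OF nfK])
  have iK: "(f ^^ j) z0 \<in> K" for j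
    by (induct j) (auto simp: f_def z0K Kadd Kpow tK)
  have lamK: "lam \<in> K" unfolding lam by (intro Kprod Kmult Knat Kpow iK)
  show ?thesis
  proof (intro exI[of _ K] conjI allI impI nfK lamK)
    fix v assume nav: "nonarch_abs K v"
    interpret N: NAD K v d t f
      by (intro NAD.intro NA.intro NF.intro NA_axioms.intro NAD_axioms.intro nfK nav d2 tK)
         (simp add: f_def)
    have vt: "v t \<le> 1" by (rule N.vt_le[OF fin])
    have vz1: "v ((f ^^ j) z0) \<le> 1" for j
    proof (rule N.per_le1[OF vt iK n])
      show "(f ^^ n) ((f ^^ j) z0) = (f ^^ j) z0"
        using per by (metis (no_types) add.commute comp_apply funpow_add)
    qed
    have vlam: "v lam = (\<Prod>j<n. v (of_nat d) * v ((f ^^ j) z0) ^ (d - 1))"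
      unfolding lam using N.vprod[of "{..<n}" "\<lambda>j. of_nat d * ((f ^^ j) z0) ^ (d - 1)"]
      by (simp add: N.vmult Knat Kpow iK N.vpow Kmult)
    have vdn: "0 \<le> v (of_nat d)" by (rule N.vnn[OF Knat])
    {
      assume "residual_char v dvd d"
      then have vd: "v (of_nat d) < 1" using N.rc_dvd d2 by simp
      have "v lam \<le> (\<Prod>j<n. v (of_nat d))"
        unfolding vlam
      proof (rule prod_mono)
        fix j
        have "v ((f ^^ j) z0) ^ (d - 1) \<le> 1" using vz1 N.vnn[OF iK] by (intro power_le_one) auto
        moreover have "0 \<le> v ((f ^^ j) z0) ^ (d - 1)" using N.vnn[OF iK] by simp
        ultimately show "0 \<le> v (of_nat d) * v ((f ^^ j) z0) ^ (d - 1) \<and>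
             v (of_nat d) * v ((f ^^ j) z0) ^ (d - 1) \<le> v (of_nat d)"
          using vdn by (simp add: mult_left_le)
      qed
      also have "\<dots> = v (of_nat d) ^ n" by simp
      also have "\<dots> \<le> v (of_nat d) ^ 1" using n vdn vd by (intro power_decreasing) auto
      finally show "v lam < 1" using vd by simp
    }
    {
      assume "coprime (residual_char v) d"
      then have vd: "v (of_nat d) = 1" using N.rc_coprime d2 by simp
      have "v ((f ^^ j) z0) = 1" for j
        using N.all_units[OF vd vt fin z0K n per nz, of j] vz1[of j] by simp
      then show "v lam = 1" unfolding vlam vd by simp
    }
  qed
qed

end
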